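(* Let $m\in\mathbb{N}$, $\boldsymbol{\sigma}\in\{0,1\}^m$, and let $l=|\{i\in\{1,\dots,m\}:\sigma_i=0\}|$. Let $\Delta_1(\alpha,\beta)$ be the local discrepancy of $\mathcal{H}_m(\boldsymbol{\sigma})$ and $\Delta_2(\alpha,\beta)$ the local discrepancy of $\mathcal{H}_m(\boldsymbol{\sigma}^* )$. Then $$\frac{1}{2^{2m}}\sum_{\alpha,\beta\in\mathbb{Q}^*(2^m)}\Delta_1(\alpha,\beta)\Delta_2(\alpha,\beta)=-\frac{m^2}{64}-\frac{l^2}{16}+\frac{lm}{16}-\frac{m}{192}-\frac{5}{144}-\frac{1}{9\cdot 2^{2m+2}}.$$
   Context: $\oplus$ denotes addition modulo 2. $\mathbb{Q}^*(2^m):=\{\frac1{2^m},\frac2{2^m},\dots,\frac{2^m-1}{2^m}\}$. For an $N$-element point set $\mathcal{P}$ in $[0,1)^2$ and $\alpha,\beta\in(0,1]$, the local discrepancy is $\Delta(\alpha,\beta,\mathcal{P})=A([0,\alpha)\times[0,\beta),\mathcal{P})-N\alpha\beta$, where $A([0,\alpha)\times[0,\beta),\mathcal{P})$ is the number of points of $\mathcal{P}$ in $[0,\alpha)\times[0,\beta)$. For $\boldsymbol{\sigma}\in\{0,1\}^m$ the shifted Hammersley point set is $$\mathcal{H}_m(\boldsymbol{\sigma})=\left\{\left(\frac{t_m}{2}+\frac{t_{m-1}}{2^2}+\dots+\frac{t_1}{2^m},\ \frac{s_1}{2}+\dots+\frac{s_m}{2^m}\right): t_1,\dots,t_m\in\{0,1\}\right\},$$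 with $s_j=t_j\oplus\sigma_j$; it has $2^m$ points. $\boldsymbol{\sigma}^*=(\sigma_1\oplus1,\dots,\sigma_m\oplus1)$. *)

theory Defs
  imports "HOL-Analysis.Analysis" "HOL-Library.FuncSet"
begin

definition xor2 :: "nat \<Rightarrow> nat \<Rightarrow> nat" where
  "xor2 a b = (a + b) mod 2"

definition hammersley :: "nat \<Rightarrow> (nat \<Rightarrow> nat) \<Rightarrow> (real \<times> real) set" where
  "hammersley m \<sigma> =
     (\<lambda>t. ((\<Sum>j=1..m. real (t j) / 2 ^ (m + 1 - j)),
           (\<Sum>j=1..m. real (xor2 (t j) (\<sigma> j)) / 2 ^ j)))
     ` ({1..m} \<rightarrow>\<^sub>E {0, 1})"

definition sigma_star :: "(nat \<Rightarrow> nat) \<Rightarrow> nat \<Rightarrow> nat" where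
  "sigma_star \<sigma> = (\<lambda>i. xor2 (\<sigma> i) 1)"

definition local_disc :: "(real \<times> real) set \<Rightarrow> real \<Rightarrow> real \<Rightarrow> real" where
  "local_disc P \<alpha> \<beta> =
     real (card {p \<in> P. fst p < \<alpha> \<and> snd p < \<beta>}) - real (card P) * \<alpha> * \<beta>"

definition Qstar :: "nat \<Rightarrow> real set" where
  "Qstar m = {real k / 2 ^ m | k. 1 \<le> k \<and> k \<le> 2 ^ m - 1}"

end

theory Submission
  imports Defs
begin


fun hp :: "nat list \<Rightarrow> nat \<Rightarrow> nat" where
  "hp [] x = 0"
| "hp (c#cs) x = xor2 (x mod 2) c * 2^length cs + hp cs (x div 2)"

lemma xor2_le: "xor2 a b \<le> 1" unfolding xor2_def by simp

lemma hp_lt: "hp cs x < 2^length cs"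
proof (induction cs arbitrary: x)
  case Nil then show ?case by simp
next
  case (Cons c cs)
  have A: "xor2 (x mod 2) c * 2^length cs \<le> 1 * 2^length cs" using xor2_le[of "x mod 2" c]
    by (intro mult_right_mono) auto
  have B: "(2::nat)^length (c#cs) = 2^length cs + 2^length cs" by simp
  show ?case using Cons.IH[of "x div 2"] A B by (simp only: hp.simps)
qed

lemma hp_lt2: "hp cs x < 2^length cs + b"
  using hp_lt[of cs x] by linarith

definition cnt :: "nat list \<Rightarrow> nat \<Rightarrow> nat \<Rightarrow> real" where
  "cnt cs a b = (\<Sum>x<a. if hp cs x < b then 1 else 0)"

definition Dd :: "nat list \<Rightarrow> nat \<Rightarrow> nat \<Rightarrow> real" where
  "Dd cs a b = cnt cs a b - real a * real b / 2 ^ length cs"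

lemma sum_par: fixes n :: nat shows "(\<Sum>x<2*n. f x) = (\<Sum>i<n. f (2*i)) + (\<Sum>i<n. (f (2*i+1)::real))"
  by (induction n) (auto simp: algebra_simps)

lemma sum_par_odd: fixes n :: nat shows "(\<Sum>x<2*n+1. f x) = (\<Sum>i<n+1. f (2*i)) + (\<Sum>i<n. (f (2*i+1)::real))"
  using sum_par[where n=n and f=f] by simp

lemma hp_even: "hp (c#cs) (2*i) = (c mod 2) * 2^length cs + hp cs i"
  by (simp add: xor2_def)
lemma hp_odd: "hp (c#cs) (2*i+1) = ((c+1) mod 2) * 2^length cs + hp cs i"
  by (simp add: xor2_def)

lemma cnt_split: "cnt (c#cs) (2*a) b = (\<Sum>i<a. if (c mod 2) * 2^length cs + hp cs i < b then 1 else 0)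
   + (\<Sum>i<a. if ((c+1) mod 2) * 2^length cs + hp cs i < b then 1 else 0)"
  unfolding cnt_def sum_par hp_even hp_odd ..

lemma cnt_split_odd: "cnt (c#cs) (2*a+1) b = (\<Sum>i<a+1. if (c mod 2) * 2^length cs + hp cs i < b then 1 else 0)
   + (\<Sum>i<a. if ((c+1) mod 2) * 2^length cs + hp cs i < b then 1 else 0)"
  unfolding cnt_def sum_par_odd hp_even hp_odd ..

lemma cnt_even_lo: assumes "b < 2^length cs" shows "cnt (c#cs) (2*a) b = cnt cs a b"
proof (cases "even c")
  case True
  then have "c mod 2 = 0" "(c+1) mod 2 = 1" by (auto elim!: evenE)
  then show ?thesis using assms unfolding cnt_split by (simp add: cnt_def)
next
  case False
  then have "c mod 2 = 1" "(c+1) mod 2 = 0" by (auto elim!: oddE)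
  then show ?thesis using assms unfolding cnt_split by (simp add: cnt_def)
qed

lemma cnt_even_hi: assumes "b < 2^length cs" shows "cnt (c#cs) (2*a) (2^length cs + b) = a + cnt cs a b"
proof (cases "even c")
  case True
  then have "c mod 2 = 0" "(c+1) mod 2 = 1" by (auto elim!: evenE)
  then show ?thesis using assms hp_lt2[of cs] unfolding cnt_split by (simp add: cnt_def)
next
  case False
  then have "c mod 2 = 1" "(c+1) mod 2 = 0" by (auto elim!: oddE)
  then show ?thesis using assms hp_lt2[of cs] unfolding cnt_split by (simp add: cnt_def)
qed

lemma cnt_odd_lo: assumes "b < 2^length cs"
  shows "cnt (c#cs) (2*a+1) b = cnt cs (if even c then a+1 else a) b"
proof (cases "even c")
  case True
  then have "c mod 2 = 0" "(c+1) mod 2 = 1" by (auto elim!: evenE)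
  then show ?thesis using assms True unfolding cnt_split_odd by (simp add: cnt_def)
next
  case False
  then have "c mod 2 = 1" "(c+1) mod 2 = 0" by (auto elim!: oddE)
  then show ?thesis using assms False unfolding cnt_split_odd by (simp add: cnt_def)
qed

lemma cnt_odd_hi: assumes "b < 2^length cs"
  shows "cnt (c#cs) (2*a+1) (2^length cs + b) = (if even c then a+1 else a) + cnt cs (if even c then a else a+1) b"
proof (cases "even c")
  case True
  then have "c mod 2 = 0" "(c+1) mod 2 = 1" by (auto elim!: evenE)
  then show ?thesis using assms True hp_lt2[of cs] unfolding cnt_split_odd by (simp add: cnt_def)
next
  case False
  then have "c mod 2 = 1" "(c+1) mod 2 = 0" by (auto elim!: oddE)
  then show ?thesis using assms False hp_lt2[of cs] unfolding cnt_split_odd by (simp add: cnt_def)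
qed

lemma Dd_even_lo: assumes "b < 2^length cs" shows "Dd (c#cs) (2*a) b = Dd cs a b"
  using cnt_even_lo[OF assms] unfolding Dd_def by (simp add: field_simps)

lemma Dd_even_hi: assumes "b < 2^length cs" shows "Dd (c#cs) (2*a) (2^length cs + b) = Dd cs a b"
  using cnt_even_hi[OF assms] unfolding Dd_def by (simp add: field_simps)

lemma Dd_odd_lo: assumes "b < 2^length cs"
  shows "Dd (c#cs) (2*a+1) b = Dd cs (if even c then a+1 else a) b
     + (if even c then 1/2 else -1/2) * real b / 2^length cs"
  using cnt_odd_lo[OF assms] unfolding Dd_def by (simp add: field_simps)

lemma Dd_odd_hi: assumes "b < 2^length cs"
  shows "Dd (c#cs) (2*a+1) (2^length cs + b) = Dd cs (if even c then a else a+1) b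
     + (if even c then 1/2 else -1/2) * (2^length cs - real b) / 2^length cs"
  using cnt_odd_hi[OF assms] unfolding Dd_def by (simp add: field_simps)

lemma Dd_zero: "Dd cs 0 b = 0" unfolding Dd_def cnt_def by simp

lemma Dd_full: "b < 2^length cs \<Longrightarrow> Dd cs (2^length cs) b = 0"
proof (induction cs arbitrary: b)
  case Nil then show ?case by (simp add: Dd_def cnt_def)
next
  case (Cons c cs)
  let ?N = "2^length cs :: nat"
  have e: "(2::nat)^length (c#cs) = 2 * ?N" by simp
  show ?case
  proof (cases "b < ?N")
    case True
    then show ?thesis unfolding e using Dd_even_lo[OF True, of c ?N] Cons.IH[OF True] by simp
  next
    case False
    then obtain b' where b: "b = ?N + b'" by (metis le_add_diff_inverse not_less)
    with Cons.prems have b': "b' < ?N" by simp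
    show ?thesis unfolding e b using Dd_even_hi[OF b', of c ?N] Cons.IH[OF b'] by simp
  qed
qed

lemma sum_add_split: fixes N M :: nat shows "(\<Sum>b<N+M. g b) = (\<Sum>b<N. g b) + (\<Sum>b<M. (g (N+b)::real))"
  by (induction M) (auto simp: algebra_simps)

lemma sum2_split: fixes N :: nat shows "(\<Sum>a<2*N. \<Sum>b<2*N. F a b) =
  (\<Sum>a<N. \<Sum>b<N. F (2*a) b + F (2*a) (N+b) + F (2*a+1) b + (F (2*a+1) (N+b) :: real))"
proof -
  have "(\<Sum>a<2*N. \<Sum>b<2*N. F a b) = (\<Sum>a<2*N. (\<Sum>b<N. F a b) + (\<Sum>b<N. F a (N+b)))"
    using sum_add_split[of _ N N] by (simp add: mult_2)
  also have "\<dots> = (\<Sum>a<N. ((\<Sum>b<N. F (2*a) b) + (\<Sum>b<N. F (2*a) (N+b))) +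
      ((\<Sum>b<N. F (2*a+1) b) + (\<Sum>b<N. F (2*a+1) (N+b))))"
    unfolding sum_par by (simp add: sum.distrib)
  also have "\<dots> = (\<Sum>a<N. \<Sum>b<N. F (2*a) b + F (2*a) (N+b) + F (2*a+1) b + F (2*a+1) (N+b))"
    by (simp add: sum.distrib algebra_simps)
  finally show ?thesis .
qed

lemma sum_shift1: fixes N :: nat shows "G 0 = 0 \<Longrightarrow> G N = 0 \<Longrightarrow> (\<Sum>a<N. G (a+1)) = (\<Sum>a<N. (G a::real))"
  using sum.lessThan_Suc_shift[of G N] sum.lessThan_Suc[of G N] by simp

lemma Dd_shift: "(\<Sum>a<2^length p. \<Sum>b<2^length p. f b * Dd p (a+1) b) =
   (\<Sum>a<2^length p. \<Sum>b<2^length p. f b * Dd p a b)"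
  by (rule sum_shift1) (auto simp: Dd_zero Dd_full intro!: sum.neutral)

definition RR :: "nat list \<Rightarrow> real" where
  "RR p = (\<Sum>a<2^length p. \<Sum>b<2^length p. Dd p a b)"

lemma RR_rec: "RR (c#p) = 4 * RR p + (if even c then 1/2 else -1/2) * (2^length p)^2"
proof -
  let ?N = "2^length p :: nat"
  define e :: real where "e = (if even c then 1/2 else -1/2)"
  have N: "(2::nat)^length (c#p) = 2 * ?N" by simp
  have "RR (c#p) = (\<Sum>a<?N. \<Sum>b<?N. 3 * Dd p a b + Dd p (a+1) b + e)"
    unfolding RR_def N sum2_split
  proof (intro sum.cong refl)
    fix a b assume "b \<in> {..<?N}"
    then have b: "b < ?N" by simp
    show "Dd (c#p) (2*a) b + Dd (c#p) (2*a) (?N+b) + Dd (c#p) (2*a+1) b + Dd (c#p) (2*a+1) (?N+b)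
      = 3 * Dd p a b + Dd p (a+1) b + e"
      unfolding Dd_even_lo[OF b] Dd_even_hi[OF b] Dd_odd_lo[OF b] Dd_odd_hi[OF b] e_def
      by (cases "even c") (auto simp: field_simps)
  qed
  also have "\<dots> = 3 * RR p + (\<Sum>a<?N. \<Sum>b<?N. 1 * Dd p (a+1) b) + real ?N * real ?N * e"
    unfolding RR_def by (simp add: sum.distrib sum_distrib_left)
  also have "\<dots> = 4 * RR p + e * (2^length p)^2"
    unfolding Dd_shift unfolding RR_def by (simp add: power2_eq_square)
  finally show ?thesis unfolding e_def .
qed

lemma Dd_shift01: "i \<le> 1 \<Longrightarrow> (\<Sum>a<2^length p. \<Sum>b<2^length p. f b * Dd p (a+i) b) =
   (\<Sum>a<2^length p. \<Sum>b<2^length p. f b * Dd p a b)"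
  using Dd_shift[of f p] by (cases i) auto

lemma prod_shift: "length p = length q \<Longrightarrow> (\<Sum>a<2^length p. \<Sum>b<2^length p. Dd p (a+1) b * Dd q (a+1) b) =
   (\<Sum>a<2^length p. \<Sum>b<2^length p. Dd p a b * Dd q a b)"
  by (rule sum_shift1) (auto simp: Dd_zero Dd_full intro!: sum.neutral)

lemma XY: "(\<Sum>a<2^length p. \<Sum>b<2^length p. real b * Dd p a b) +
   (\<Sum>a<2^length p. \<Sum>b<2^length p. (2^length p - real b) * Dd p a b) = 2^length p * RR p"
  unfolding RR_def sum.distrib[symmetric] sum_distrib_left
  by (intro sum.cong refl) (simp add: algebra_simps)

lemma Lin: assumes "i \<le> 1" "j \<le> 1" "k \<le> 1" "l \<le> 1" "length p = length q"
  shows "(\<Sum>a<2^length p. \<Sum>b<2^length p. real b * Dd q (a+i) b - real b * Dd p (a+j) b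
     + (2^length p - real b) * Dd q (a+k) b - (2^length p - real b) * Dd p (a+l) b)
   = 2^length p * (RR q - RR p)"
proof -
  have "(\<Sum>a<2^length p. \<Sum>b<2^length p. real b * Dd q (a+i) b - real b * Dd p (a+j) b
     + (2^length p - real b) * Dd q (a+k) b - (2^length p - real b) * Dd p (a+l) b)
   = (\<Sum>a<2^length q. \<Sum>b<2^length q. real b * Dd q (a+i) b)
     - (\<Sum>a<2^length p. \<Sum>b<2^length p. real b * Dd p (a+j) b)
     + (\<Sum>a<2^length q. \<Sum>b<2^length q. (2^length q - real b) * Dd q (a+k) b)
     - (\<Sum>a<2^length p. \<Sum>b<2^length p. (2^length p - real b) * Dd p (a+l) b)"
    using assms(5) by (simp add: sum.distrib sum_subtractf)
  also have "\<dots> = 2^length q * RR q - 2^length p * RR p"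
    unfolding Dd_shift01[OF assms(1)] Dd_shift01[OF assms(2)] Dd_shift01[OF assms(3)] Dd_shift01[OF assms(4)]
    using XY[of p] XY[of q] by linarith
  finally show ?thesis using assms(5) by (simp add: algebra_simps)
qed

lemma sum_sq: "(\<Sum>b<N. real b ^ 2) = real N * (real N - 1) * (2 * real N - 1) / 6"
  by (induction N) (auto simp: field_simps power2_eq_square)
lemma sum_lin: "(\<Sum>b<N. real b) = real N * (real N - 1) / 2"
  by (induction N) (auto simp: field_simps)

lemma W_sum: "(\<Sum>b<N. real b ^ 2 + (real N - real b) ^ 2) = real N * (2 * real N ^ 2 + 1) / 3"
proof -
  have "(\<Sum>b<N. real b ^ 2 + (real N - real b) ^ 2) = (\<Sum>b<N. 2 * real b ^ 2 - 2 * real N * real b + real N ^ 2)"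
    by (intro sum.cong refl) (simp add: power2_eq_square algebra_simps)
  also have "\<dots> = 2 * (\<Sum>b<N. real b ^ 2) - 2 * real N * (\<Sum>b<N. real b) + real N * real N ^ 2"
    by (simp add: sum.distrib sum_subtractf sum_distrib_left)
  finally show ?thesis unfolding sum_sq sum_lin by (simp add: field_simps power2_eq_square power3_eq_cube)
qed

lemma lincomb: "(\<Sum>a\<in>I. \<Sum>b\<in>J. 2 * A a b + B a b + c1 * L a b - c2 * W a b) =
  2 * (\<Sum>a\<in>I. \<Sum>b\<in>J. A a b) + (\<Sum>a\<in>I. \<Sum>b\<in>J. B a b) + c1 * (\<Sum>a\<in>I. \<Sum>b\<in>J. L a b)
   - c2 * (\<Sum>a\<in>I. \<Sum>b\<in>J. (W a b :: real))"
  by (simp add: sum.distrib sum_subtractf sum_distrib_left)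

lemma lincomb2: "(\<Sum>a\<in>I. \<Sum>b\<in>J. 2 * A a b + 2 * B a b + 2 * C a b + e * (Q0 a b - P0 a b + Q1 a b - P1 a b)) =
  2 * (\<Sum>a\<in>I. \<Sum>b\<in>J. A a b) + 2 * (\<Sum>a\<in>I. \<Sum>b\<in>J. B a b) + 2 * (\<Sum>a\<in>I. \<Sum>b\<in>J. C a b)
   + e * ((\<Sum>a\<in>I. \<Sum>b\<in>J. Q0 a b) - (\<Sum>a\<in>I. \<Sum>b\<in>J. P0 a b) + (\<Sum>a\<in>I. \<Sum>b\<in>J. Q1 a b)
     - (\<Sum>a\<in>I. \<Sum>b\<in>J. (P1 a b :: real)))"
  by (simp add: sum.distrib sum_subtractf sum_distrib_left right_diff_distrib distrib_left)

definition SS :: "nat list \<Rightarrow> nat list \<Rightarrow> real" where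
  "SS p q = (\<Sum>a<2^length p. \<Sum>b<2^length p. Dd p a b * Dd q a b)"
definition VV :: "nat list \<Rightarrow> nat list \<Rightarrow> real" where
  "VV p q = (\<Sum>a<2^length p. \<Sum>b<2^length p. Dd p (a+1) b * Dd q a b + Dd p a b * Dd q (a+1) b)"

lemma SS_rec: assumes len: "length p = length q" and par: "even c \<longleftrightarrow> odd d"
  shows "SS (c#p) (d#q) = 2 * SS p q + VV p q + (if even c then 1/2 else -1/2) * (RR q - RR p)
     - (2 * (2^length p)^2 + 1) / 12"
proof -
  let ?N = "2^length p :: nat"
  define e :: real where "e = (if even c then 1/2 else -1/2)"
  define \<delta> :: nat where "\<delta> = (if even c then 1 else 0)"
  have N: "(2::nat)^length (c#p) = 2 * ?N" by simp
  have "SS (c#p) (d#q) = (\<Sum>a<?N. \<Sum>b<?N. 2 * (Dd p a b * Dd q a b)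
      + (Dd p (a+1) b * Dd q a b + Dd p a b * Dd q (a+1) b)
      + (e / ?N) * (real b * Dd q (a+(1-\<delta>)) b - real b * Dd p (a+\<delta>) b
     + (2^length p - real b) * Dd q (a+\<delta>) b - (2^length p - real b) * Dd p (a+(1-\<delta>)) b)
      - (1 / (4 * ?N^2)) * (real b ^ 2 + (real ?N - real b) ^ 2))"
    unfolding SS_def N sum2_split
  proof (intro sum.cong refl)
    fix a b assume "b \<in> {..<?N}"
    then have b: "b < ?N" by simp
    then have bq: "b < 2^length q" using len by simp
    note L = Dd_even_lo[OF b] Dd_even_hi[OF b] Dd_odd_lo[OF b] Dd_odd_hi[OF b]
      Dd_even_lo[OF bq, unfolded len[symmetric]] Dd_even_hi[OF bq, unfolded len[symmetric]]
      Dd_odd_lo[OF bq, unfolded len[symmetric]] Dd_odd_hi[OF bq, unfolded len[symmetric]]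
    show "Dd (c#p) (2*a) b * Dd (d#q) (2*a) b + Dd (c#p) (2*a) (?N+b) * Dd (d#q) (2*a) (?N+b)
       + Dd (c#p) (2*a+1) b * Dd (d#q) (2*a+1) b + Dd (c#p) (2*a+1) (?N+b) * Dd (d#q) (2*a+1) (?N+b)
      = 2 * (Dd p a b * Dd q a b)
      + (Dd p (a+1) b * Dd q a b + Dd p a b * Dd q (a+1) b)
      + (e / ?N) * (real b * Dd q (a+(1-\<delta>)) b - real b * Dd p (a+\<delta>) b
     + (2^length p - real b) * Dd q (a+\<delta>) b - (2^length p - real b) * Dd p (a+(1-\<delta>)) b)
      - (1 / (4 * ?N^2)) * (real b ^ 2 + (real ?N - real b) ^ 2)"
      unfolding L e_def \<delta>_def using par
      by (cases "even c") (auto simp: field_simps power2_eq_square)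
  qed
  also have "\<dots> = 2 * SS p q + VV p q + (e / ?N) * (?N * (RR q - RR p))
     - (1 / (4 * ?N^2)) * (\<Sum>a<?N. real ?N * (2 * real ?N ^ 2 + 1) / 3)"
    unfolding lincomb SS_def VV_def W_sum
    by (subst Lin) (use len in \<open>auto simp: \<delta>_def\<close>)
  also have "\<dots> = 2 * SS p q + VV p q + e * (RR q - RR p) - (2 * (2^length p)^2 + 1) / 12"
    by (simp add: field_simps power2_eq_square)
  finally show ?thesis unfolding e_def .
qed

lemma VV_rec: assumes len: "length p = length q" and par: "even c \<longleftrightarrow> odd d"
  shows "VV (c#p) (d#q) = 2 * VV p q + 4 * SS p q + 2 * (if even c then 1/2 else -1/2) * (RR q - RR p)"
proof -
  let ?N = "2^length p :: nat"
  define e :: real where "e = (if even c then 1/2 else -1/2)"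
  have N: "(2::nat)^length (c#p) = 2 * ?N" by simp
  have aa: "\<And>a::nat. 2*a+1+1 = 2*(a+1)" by simp
  have "VV (c#p) (d#q) = (\<Sum>a<?N. \<Sum>b<?N. 2 * (Dd p a b * Dd q a b)
      + 2 * (Dd p (a+1) b * Dd q a b + Dd p a b * Dd q (a+1) b)
      + 2 * (Dd p (a+1) b * Dd q (a+1) b)
      + e * (1 * Dd q a b - 1 * Dd p a b + 1 * Dd q (a+1) b - 1 * Dd p (a+1) b))"
    unfolding VV_def N sum2_split aa
  proof (intro sum.cong refl)
    fix a b assume "b \<in> {..<?N}"
    then have b: "b < ?N" by simp
    then have bq: "b < 2^length q" using len by simp
    note L = Dd_even_lo[OF b] Dd_even_hi[OF b] Dd_odd_lo[OF b] Dd_odd_hi[OF b]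
      Dd_even_lo[OF bq, unfolded len[symmetric]] Dd_even_hi[OF bq, unfolded len[symmetric]]
      Dd_odd_lo[OF bq, unfolded len[symmetric]] Dd_odd_hi[OF bq, unfolded len[symmetric]]
    show "Dd (c#p) (2*a+1) b * Dd (d#q) (2*a) b + Dd (c#p) (2*a) b * Dd (d#q) (2*a+1) b
       + (Dd (c#p) (2*a+1) (?N+b) * Dd (d#q) (2*a) (?N+b) + Dd (c#p) (2*a) (?N+b) * Dd (d#q) (2*a+1) (?N+b))
       + (Dd (c#p) (2*(a+1)) b * Dd (d#q) (2*a+1) b + Dd (c#p) (2*a+1) b * Dd (d#q) (2*(a+1)) b)
       + (Dd (c#p) (2*(a+1)) (?N+b) * Dd (d#q) (2*a+1) (?N+b) + Dd (c#p) (2*a+1) (?N+b) * Dd (d#q) (2*(a+1)) (?N+b))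
      = 2 * (Dd p a b * Dd q a b)
      + 2 * (Dd p (a+1) b * Dd q a b + Dd p a b * Dd q (a+1) b)
      + 2 * (Dd p (a+1) b * Dd q (a+1) b)
      + e * (1 * Dd q a b - 1 * Dd p a b + 1 * Dd q (a+1) b - 1 * Dd p (a+1) b)"
      unfolding L e_def using par
      by (cases "even c") (auto simp: field_simps)
  qed
  also have "\<dots> = 2 * SS p q + 2 * VV p q + 2 * SS p q + e * (2 * (RR q - RR p))"
    unfolding lincomb2 SS_def VV_def RR_def
    using prod_shift[OF len] Dd_shift[of "\<lambda>_. 1" p] Dd_shift[of "\<lambda>_. 1" q] len
    by simp
  finally show ?thesis unfolding e_def by simp
qed

definition fl :: "nat list \<Rightarrow> nat list" where "fl p = map (\<lambda>c. xor2 c 1) p"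
definition zz :: "nat list \<Rightarrow> real" where "zz p = sum_list (map (\<lambda>c. if even c then 1/2 else -1/2) p)"

lemma fl_Cons: "fl (c#p) = xor2 c 1 # fl p" by (simp add: fl_def)
lemma fl_len: "length (fl p) = length p" by (simp add: fl_def)
lemma par_xor: "even c \<longleftrightarrow> odd (xor2 c 1)" by (simp add: xor2_def)

lemma main_inv: "RR (fl p) - RR p = - zz p / 2 * (2^length p)^2 \<and>
  (p \<noteq> [] \<longrightarrow> SS p (fl p) = (2^length p)^2 * (- ((zz p) ^ 2) / 16 - real (length p)/192 - 5/144) - 1/36
     \<and> VV p (fl p) = 2 * SS p (fl p) + (2^length p)^2 / 12 + 1/6)"
proof (induction p)
  case Nil
  show ?case by (simp add: RR_def fl_def zz_def Dd_def cnt_def)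
next
  case (Cons c p)
  define e :: real where "e = (if even c then 1/2 else -1/2)"
  define n :: real where "n = 2^length p"
  have z: "zz (c#p) = e + zz p" by (simp add: zz_def e_def)
  have L: "length (fl p) = length p" by (rule fl_len)
  have P: "even c \<longleftrightarrow> odd (xor2 c 1)" by (rule par_xor)
  have R1: "RR (c#p) = 4 * RR p + e * n^2" unfolding RR_rec e_def n_def by simp
  have R2: "RR (fl (c#p)) = 4 * RR (fl p) - e * n^2"
    unfolding fl_Cons RR_rec e_def n_def L using P by auto
  have S: "SS (c#p) (fl (c#p)) = 2 * SS p (fl p) + VV p (fl p) + e * (RR (fl p) - RR p) - (2 * n^2 + 1) / 12"
    unfolding fl_Cons SS_rec[OF L[symmetric] P] e_def n_def by simp
  have V: "VV (c#p) (fl (c#p)) = 2 * VV p (fl p) + 4 * SS p (fl p) + 2 * e * (RR (fl p) - RR p)"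
    unfolding fl_Cons VV_rec[OF L[symmetric] P] e_def n_def by simp
  have E: "RR (fl p) - RR p = - zz p / 2 * n^2" using Cons.IH n_def by simp
  have e2: "e^2 = 1/4" by (simp add: e_def power2_eq_square)
  have N2: "(2::real)^length (c#p) = 2 * n" by (simp add: n_def)
  show ?case
  proof (cases "p = []")
    case True
    then have "SS p (fl p) = 0" "VV p (fl p) = 0" "n = 1" "zz p = 0" "RR (fl p) - RR p = 0"
      by (simp_all add: SS_def VV_def RR_def fl_def Dd_def cnt_def n_def zz_def)
    then show ?thesis unfolding N2 R1 R2 S V z using True e2
      by (simp add: field_simps power2_eq_square)
  next
    case False
    then have IS: "SS p (fl p) = n^2 * (- ((zz p) ^ 2) / 16 - real (length p)/192 - 5/144) - 1/36"
      and IV: "VV p (fl p) = 2 * SS p (fl p) + n^2 / 12 + 1/6"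
      using Cons.IH n_def by auto
    show ?thesis unfolding N2 R1 R2 S V z E IV IS using e2 E
      by (simp add: field_simps power2_eq_square)
  qed
qed



definition ds :: "(nat \<Rightarrow> nat) \<Rightarrow> nat \<Rightarrow> nat" where "ds d m = (\<Sum>i<m. d i * 2^i)"

lemma ds_Suc: "ds d (Suc m) = d 0 + 2 * ds (\<lambda>i. d (Suc i)) m"
  unfolding ds_def sum.lessThan_Suc_shift by (simp add: sum_distrib_left algebra_simps)

lemma ds_lt: "(\<forall>i<m. d i \<le> 1) \<Longrightarrow> ds d m < 2^m"
proof (induction m arbitrary: d)
  case 0 then show ?case by (simp add: ds_def)
next
  case (Suc m)
  have "ds (\<lambda>i. d (Suc i)) m < 2^m" using Suc by auto
  moreover have "d 0 \<le> 1" using Suc.prems by auto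
  ultimately show ?case unfolding ds_Suc by simp
qed

lemma ds_digit: "(\<forall>i<m. d i \<le> 1) \<Longrightarrow> k < m \<Longrightarrow> ds d m div 2^k mod 2 = d k"
proof (induction m arbitrary: d k)
  case 0 then show ?case by simp
next
  case (Suc m)
  have d0: "d 0 \<le> 1" using Suc.prems by auto
  show ?case
  proof (cases k)
    case 0
    then show ?thesis unfolding ds_Suc using d0 by simp
  next
    case (Suc k')
    have "(d 0 + 2 * ds (\<lambda>i. d (Suc i)) m) div 2 = ds (\<lambda>i. d (Suc i)) m" using d0 by simp
    then have h: "ds d (Suc m) div 2 = ds (\<lambda>i. d (Suc i)) m" unfolding ds_Suc .
    have "ds d (Suc m) div 2^k = ds d (Suc m) div 2 div 2^k'"
      unfolding Suc by (simp add: div_mult2_eq)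
    then have "ds d (Suc m) div 2^k = ds (\<lambda>i. d (Suc i)) m div 2^k'" unfolding h .
    also have "\<dots> mod 2 = d (Suc k')" using Suc.IH[of "\<lambda>i. d (Suc i)" k'] Suc.prems \<open>k = Suc k'\<close> by auto
    finally show ?thesis using Suc by simp
  qed
qed

lemma ds_bits: "ds (\<lambda>i. X div 2^i mod 2) m = X mod 2^m"
proof (induction m arbitrary: X)
  case 0 then show ?case by (simp add: ds_def)
next
  case (Suc m)
  have "ds (\<lambda>i. X div 2^i mod 2) (Suc m) = X mod 2 + 2 * ds (\<lambda>i. (X div 2) div 2^i mod 2) m"
    unfolding ds_Suc by (simp add: div_mult2_eq)
  also have "\<dots> = X mod 2 + 2 * (X div 2 mod 2^m)" using Suc.IH by simp
  also have "\<dots> = X mod 2^Suc m" by (simp add: mod_mult2_eq)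
  finally show ?case .
qed

lemma hp_formula: "hp (map \<sigma> [k..<k+n]) X = (\<Sum>i<n. xor2 (X div 2^i mod 2) (\<sigma> (k+i)) * 2^(n-1-i))"
proof (induction n arbitrary: k X)
  case 0 then show ?case by simp
next
  case (Suc n)
  have u: "[k..<k+Suc n] = k # [Suc k..<Suc k+n]" by (simp add: upt_conv_Cons)
  have "hp (map \<sigma> [k..<k+Suc n]) X = xor2 (X mod 2) (\<sigma> k) * 2^n + hp (map \<sigma> [Suc k..<Suc k+n]) (X div 2)"
    unfolding u by (simp only: list.map hp.simps length_map length_upt) simp
  also have "\<dots> = xor2 (X mod 2) (\<sigma> k) * 2^n + (\<Sum>i<n. xor2 (X div 2^(Suc i) mod 2) (\<sigma> (k+Suc i)) * 2^(Suc n-1-Suc i))"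
    unfolding Suc.IH by (simp add: div_mult2_eq)
  also have "\<dots> = (\<Sum>i<Suc n. xor2 (X div 2^i mod 2) (\<sigma> (k+i)) * 2^(Suc n-1-i))"
    unfolding sum.lessThan_Suc_shift by simp
  finally show ?case .
qed

lemma sum_1m: "(\<Sum>j=1..m. g j) = (\<Sum>i<m. (g (Suc i) :: real))"
  by (induction m) (auto simp: sum.atLeast_Suc_atMost)

lemma PiE_le: assumes "t \<in> {1..m} \<rightarrow>\<^sub>E {0, 1::nat}" shows "\<forall>i<m. t (Suc i) \<le> 1"
proof (intro allI impI)
  fix i assume "i < m"
  then have "t (Suc i) \<in> {0,1}" using PiE_mem[OF assms, of "Suc i"] by simp
  then show "t (Suc i) \<le> 1" by auto
qed

lemma hp_formula': "hp (map \<sigma> [1..<Suc m]) X = (\<Sum>i<m. xor2 (X div 2^i mod 2) (\<sigma> (Suc i)) * 2^(m-1-i))"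
proof -
  have e: "[1..<1+m] = [1..<Suc m]" by simp
  show ?thesis using hp_formula[of \<sigma> 1 m X] unfolding e by simp
qed

definition hf :: "nat \<Rightarrow> (nat \<Rightarrow> nat) \<Rightarrow> nat \<Rightarrow> real \<times> real" where
  "hf m \<sigma> X = (real X / 2^m, real (hp (map \<sigma> [1..<Suc m]) X) / 2^m)"

lemma pt_eq:
  assumes t: "t \<in> {1..m} \<rightarrow>\<^sub>E {0, 1}"
  shows "((\<Sum>j=1..m. real (t j) / 2 ^ (m + 1 - j)),
           (\<Sum>j=1..m. real (xor2 (t j) (\<sigma> j)) / 2 ^ j)) = hf m \<sigma> (ds (\<lambda>i. t (Suc i)) m)"
proof -
  have le: "\<forall>i<m. t (Suc i) \<le> 1" using PiE_le[OF t] .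
  have x: "(\<Sum>j=1..m. real (t j) / 2 ^ (m + 1 - j)) = real (ds (\<lambda>i. t (Suc i)) m) / 2^m"
    unfolding sum_1m ds_def of_nat_sum sum_divide_distrib
  proof (intro sum.cong refl)
    fix i assume "i \<in> {..<m}"
    then have "(2::real)^m = 2^(m-i) * 2^i" by (simp add: power_add[symmetric])
    then show "real (t (Suc i)) / 2 ^ (m + 1 - Suc i) = real (t (Suc i) * 2 ^ i) / 2 ^ m"
      by (simp add: field_simps)
  qed
  have y: "(\<Sum>j=1..m. real (xor2 (t j) (\<sigma> j)) / 2 ^ j) = real (hp (map \<sigma> [1..<Suc m]) (ds (\<lambda>i. t (Suc i)) m)) / 2^m"
    unfolding hp_formula' sum_1m of_nat_sum sum_divide_distrib
  proof (intro sum.cong refl)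
    fix i assume "i \<in> {..<m}"
    then have i: "i < m" by simp
    then have "m = (m-1-i) + Suc i" by simp
    then have "(2::real)^m = 2^(m-1-i) * 2^Suc i" by (metis power_add)
    moreover have "ds (\<lambda>i. t (Suc i)) m div 2^i mod 2 = t (Suc i)" using ds_digit[OF le i] .
    ultimately show "real (xor2 (t (Suc i)) (\<sigma> (Suc i))) / 2 ^ Suc i =
      real (xor2 (ds (\<lambda>i. t (Suc i)) m div 2 ^ i mod 2) (\<sigma> (Suc i)) * 2 ^ (m - 1 - i)) / 2 ^ m"
      by (simp add: field_simps)
  qed
  show ?thesis unfolding x y hf_def ..
qed

lemma ham_eq: "hammersley m \<sigma> = hf m \<sigma> ` {..<2^m}"
proof
  show "hammersley m \<sigma> \<subseteq> hf m \<sigma> ` {..<2^m}"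
  proof
    fix p assume "p \<in> hammersley m \<sigma>"
    then obtain t where t: "t \<in> {1..m} \<rightarrow>\<^sub>E {0, 1}" and p: "p = ((\<Sum>j=1..m. real (t j) / 2 ^ (m + 1 - j)),
           (\<Sum>j=1..m. real (xor2 (t j) (\<sigma> j)) / 2 ^ j))" unfolding hammersley_def by blast
    have "\<forall>i<m. t (Suc i) \<le> 1" using PiE_le[OF t] .
    then have "ds (\<lambda>i. t (Suc i)) m < 2^m" by (rule ds_lt)
    then show "p \<in> hf m \<sigma> ` {..<2^m}" unfolding p pt_eq[OF t] by simp
  qed
next
  show "hf m \<sigma> ` {..<2^m} \<subseteq> hammersley m \<sigma>"
  proof
    fix p assume "p \<in> hf m \<sigma> ` {..<2^m}"
    then obtain X where X: "X < 2^m" and p: "p = hf m \<sigma> X" by auto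
    define t where "t = restrict (\<lambda>j. X div 2^(j-1) mod 2) {1..m}"
    have t: "t \<in> {1..m} \<rightarrow>\<^sub>E {0, 1}" unfolding t_def by auto
    have "ds (\<lambda>i. t (Suc i)) m = ds (\<lambda>i. X div 2^i mod 2) m"
      unfolding ds_def t_def by (intro sum.cong refl) auto
    also have "\<dots> = X" using X by (simp add: ds_bits)
    finally have "p = ((\<Sum>j=1..m. real (t j) / 2 ^ (m + 1 - j)),
           (\<Sum>j=1..m. real (xor2 (t j) (\<sigma> j)) / 2 ^ j))" unfolding p pt_eq[OF t] by simp
    then show "p \<in> hammersley m \<sigma>" unfolding hammersley_def using t by blast
  qed
qed

lemma hf_inj: "inj_on (hf m \<sigma>) A"
  by (rule inj_onI) (auto simp: hf_def)

lemma card_ham: "card (hammersley m \<sigma>) = 2^m"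
  unfolding ham_eq by (simp add: card_image[OF hf_inj])

lemma card_filter_sum: "finite A \<Longrightarrow> real (card {x\<in>A. P x}) = (\<Sum>x\<in>A. if P x then 1 else 0)"
  by (subst real_of_card, rule sum.inter_filter)

lemma ld_eq: assumes "a \<le> 2^m"
  shows "local_disc (hammersley m \<sigma>) (real a / 2^m) (real b / 2^m) = Dd (map \<sigma> [1..<Suc m]) a b"
proof -
  let ?cs = "map \<sigma> [1..<Suc m]"
  have E: "{p \<in> hammersley m \<sigma>. fst p < real a / 2^m \<and> snd p < real b / 2^m}
      = hf m \<sigma> ` {X \<in> {..<a}. hp ?cs X < b}"
    unfolding ham_eq using assms by (auto simp: hf_def divide_less_cancel image_iff simp del: upt_Suc)
  have c1: "card {p \<in> hammersley m \<sigma>. fst p < real a / 2^m \<and> snd p < real b / 2^m}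
      = card {X \<in> {..<a}. hp ?cs X < b}" unfolding E by (rule card_image[OF hf_inj])
  have "real (card {p \<in> hammersley m \<sigma>. fst p < real a / 2^m \<and> snd p < real b / 2^m}) = cnt ?cs a b"
    unfolding cnt_def c1 by (rule card_filter_sum) simp
  then show ?thesis unfolding local_disc_def Dd_def card_ham by simp
qed

lemma Dd_zero2: "Dd cs a 0 = 0" by (simp add: Dd_def cnt_def)

lemma ext0: fixes N :: nat assumes "N \<ge> 1" "f 0 = 0" shows "(\<Sum>k\<in>{1..N-1}. f k) = (\<Sum>k<N. (f k :: real))"
proof -
  have "{..<N} = insert 0 {1..N-1}" using assms(1) by auto
  then show ?thesis using assms(2) by simp
qed

lemma zz_eq: assumes "\<forall>i\<in>{1..m}. \<sigma> i \<in> {0, 1}"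
  shows "zz (map \<sigma> [1..<Suc m]) = real (card {i \<in> {1..m}. \<sigma> i = 0}) - real m / 2"
proof -
  have "zz (map \<sigma> [1..<Suc m]) = (\<Sum>i\<in>{1..m}. if even (\<sigma> i) then 1/2 else -1/2)"
    unfolding zz_def map_map interv_sum_list_conv_sum_set_nat o_def set_upt atLeastLessThanSuc_atLeastAtMost ..
  also have "\<dots> = (\<Sum>i\<in>{1..m}. (if \<sigma> i = 0 then 1 else 0) - 1/2)"
  proof (intro sum.cong refl)
    fix i assume "i \<in> {1..m}"
    then have "\<sigma> i = 0 \<or> \<sigma> i = 1" using assms by auto
    then show "(if even (\<sigma> i) then 1/2 else -1/2) = (if \<sigma> i = 0 then 1 else 0) - (1/2::real)" by auto
  qed
  also have "\<dots> = real (card {i \<in> {1..m}. \<sigma> i = 0}) - real m / 2"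
    unfolding sum_subtractf card_filter_sum[of "{1..m}", symmetric, OF finite_atLeastAtMost] by simp
  finally show ?thesis .
qed

theorem lemma5:
  fixes m :: nat and \<sigma> :: "nat \<Rightarrow> nat"
  assumes "m \<ge> 1"
    and "\<forall>i\<in>{1..m}. \<sigma> i \<in> {0, 1}"
  defines "l \<equiv> card {i \<in> {1..m}. \<sigma> i = 0}"
  shows "(1 / 2 ^ (2 * m)) *
           (\<Sum>\<alpha>\<in>Qstar m. \<Sum>\<beta>\<in>Qstar m.
              local_disc (hammersley m \<sigma>) \<alpha> \<beta> *
              local_disc (hammersley m (sigma_star \<sigma>)) \<alpha> \<beta>)
         = - (real m ^ 2 / 64) - real l ^ 2 / 16 + real l * real m / 16
           - real m / 192 - 5 / 144 - 1 / (9 * 2 ^ (2 * m + 2))"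
proof -
  define cs where "cs = map \<sigma> [1..<Suc m]"
  define g :: "nat \<Rightarrow> real" where "g k = real k / 2^m" for k
  have fl: "map (sigma_star \<sigma>) [1..<Suc m] = fl cs" unfolding fl_def sigma_star_def cs_def by simp
  have len: "length cs = m" unfolding cs_def by simp
  have ne: "cs \<noteq> []" using assms(1) len by auto
  have Q: "Qstar m = g ` {1..2^m - 1}" unfolding Qstar_def g_def by auto
  have inj: "inj_on g A" for A by (auto simp: g_def inj_on_def)
  have N1: "(2::nat)^m \<ge> 1" by simp
  have "(\<Sum>\<alpha>\<in>Qstar m. \<Sum>\<beta>\<in>Qstar m.
              local_disc (hammersley m \<sigma>) \<alpha> \<beta> *
              local_disc (hammersley m (sigma_star \<sigma>)) \<alpha> \<beta>)
     = (\<Sum>a\<in>{1..2^m-1}. \<Sum>b\<in>{1..2^m-1}. Dd cs a b * Dd (fl cs) a b)"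
    unfolding Q sum.reindex[OF inj] o_def
  proof (intro sum.cong refl)
    fix a b :: nat assume "a \<in> {1..2^m - 1}"
    then have "a \<le> 2^m - 1" by simp
    then have a: "a \<le> 2^m" by linarith
    show "local_disc (hammersley m \<sigma>) (g a) (g b) * local_disc (hammersley m (sigma_star \<sigma>)) (g a) (g b)
        = Dd cs a b * Dd (fl cs) a b"
      unfolding g_def ld_eq[OF a] fl cs_def ..
  qed
  also have "\<dots> = (\<Sum>a<2^m. \<Sum>b<2^m. Dd cs a b * Dd (fl cs) a b)"
    by (subst ext0[OF N1], simp add: Dd_zero, intro sum.cong refl ext0[OF N1]) (simp add: Dd_zero2)
  also have "\<dots> = SS cs (fl cs)" unfolding SS_def len ..
  finally have S: "(\<Sum>\<alpha>\<in>Qstar m. \<Sum>\<beta>\<in>Qstar m.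
              local_disc (hammersley m \<sigma>) \<alpha> \<beta> *
              local_disc (hammersley m (sigma_star \<sigma>)) \<alpha> \<beta>) = SS cs (fl cs)" .
  have SS: "SS cs (fl cs) = (2^m)^2 * (- ((zz cs) ^ 2) / 16 - real m / 192 - 5/144) - 1/36"
    using main_inv[of cs] ne len by simp
  have z: "zz cs = real l - real m / 2" unfolding cs_def l_def using zz_eq[OF assms(2)] .
  have p1: "(2::real) ^ (2 * m) = (2^m)^2" by (simp add: power_mult[symmetric] mult.commute)
  have p2: "(2::real) ^ (2 * m + 2) = 4 * (2^m)^2" using p1 by simp
  show ?thesis unfolding S SS z p1 p2
    by (simp add: field_simps power2_eq_square)
qed

end
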